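(* Let $k,s$ be positive integers, $\mathbf a=(a_1,\dots,a_s)$ nonzero integers and $p$ a prime with $p\nmid \gcd(a_{1},\dots,a_{s})$. Then for all $l\ge \xi(p)$, \[\chi_{p}=\sum_{m=0}^{l}T_{\mathbf a}\left(p^{m}\right)=\sum_{m=0}^{\xi(p)}T_{\mathbf a}\left(p^{m}\right)=p^{\xi(p)}\varphi\left(p^{\xi(p)}\right)^{-s}M_{\mathbf a}\left(p^{\xi(p)}\right),\] and in particular, if $a_1x_1^k+\dots+a_sx_s^k\equiv 0\pmod{p^{\xi(p)}}$ has a solution with all $x_j\in(\mathbb Z/p^{\xi(p)}\mathbb Z)^{\times}$, then $a_1x_1^k+\dots+a_sx_s^k=0$ has a solution with all $x_j\in \mathbb Z_{p}^{\times}$ and $\chi_{p}\ge p^{-(s-1)\xi(p)}>0$.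
   Context: $p^{\nu(p)}\Vert k$ defines $\nu(p)$; $\xi(p)=\nu(p)+2$ if $p=2$, $\xi(p)=\nu(p)+1$ otherwise. $e_q(x)=e^{2\pi ix/q}$, $\varphi$ is Euler's function, $W(q,r)=\sum_{1\le h\le q,\ (h,q)=1}e_q(rh^k)$, $T_{\mathbf a}(q)=\varphi(q)^{-s}\sum_{1\le r\le q,\ (r,q)=1}\prod_jW(q,a_jr)$. $M_{\mathbf a}(p^n)$ is the number of $(x_1,\dots,x_s)\in((\mathbb Z/p^n\mathbb Z)^\times)^s$ with $\sum_ja_jx_j^k\equiv0\pmod{p^n}$, and $\chi_p=\lim_{n\to\infty}p^n\varphi(p^n)^{-s}M_{\mathbf a}(p^n)$. $\mathbb Z_p^\times=\{x\in\mathbb Q_p:|x|_p=1\}$. *)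

theory Defs
  imports "HOL-Analysis.Analysis" "HOL-Number_Theory.Number_Theory"
begin

definition nu :: "nat \<Rightarrow> nat \<Rightarrow> nat" where
  "nu k p = multiplicity p k"

definition xi :: "nat \<Rightarrow> nat \<Rightarrow> nat" where
  "xi k p = (if p = 2 then nu k p + 2 else nu k p + 1)"

definition e :: "nat \<Rightarrow> int \<Rightarrow> complex" where
  "e q x = exp (2 * of_real pi * \<i> * of_int x / of_nat q)"

definition W :: "nat \<Rightarrow> nat \<Rightarrow> int \<Rightarrow> complex" where
  "W k q r = (\<Sum>h\<in>{h\<in>{1..q}. coprime h q}. e q (r * int h ^ k))"

definition T :: "nat \<Rightarrow> nat \<Rightarrow> (nat \<Rightarrow> int) \<Rightarrow> nat \<Rightarrow> complex" where
  "T k s a q = (\<Sum>r\<in>{r\<in>{1..q}. coprime r q}. (\<Prod>j\<in>{1..s}. W k q (a j * int r)))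
                / of_nat (totient q) ^ s"

definition M :: "nat \<Rightarrow> nat \<Rightarrow> (nat \<Rightarrow> int) \<Rightarrow> nat \<Rightarrow> nat" where
  "M k s a q = card {x \<in> PiE {1..s} (\<lambda>_. {y\<in>{0..<q}. coprime y q}).
                      int q dvd (\<Sum>j\<in>{1..s}. a j * int (x j) ^ k)}"

definition chi :: "nat \<Rightarrow> nat \<Rightarrow> (nat \<Rightarrow> int) \<Rightarrow> nat \<Rightarrow> real" where
  "chi k s a p = lim (\<lambda>n. real p ^ n * real (M k s a (p ^ n)) / real (totient (p ^ n)) ^ s)"

text \<open>A solution in (Z_p^*)^s of sum a_j x_j^k = 0, each p-adic integer x_j being represented
  by a p-adically Cauchy sequence of integers x j n (x j (n+1) = x j n mod p^n), i.e. an element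
  of the inverse limit of Z/p^n Z; units means the approximations are prime to p.\<close>
definition padic_unit_solution :: "nat \<Rightarrow> nat \<Rightarrow> (nat \<Rightarrow> int) \<Rightarrow> nat \<Rightarrow> bool" where
  "padic_unit_solution k s a p \<longleftrightarrow>
     (\<exists>x :: nat \<Rightarrow> nat \<Rightarrow> int.
        (\<forall>j\<in>{1..s}. \<forall>n. [x j (Suc n) = x j n] (mod int p ^ n)) \<and>
        (\<forall>j\<in>{1..s}. \<forall>n. coprime (x j n) (int p)) \<and>
        (\<forall>n. [(\<Sum>j\<in>{1..s}. a j * x j n ^ k) = 0] (mod int p ^ n)))"

end

theory Submission
  imports Defs
begin

lemma Lp:
  fixes p :: nat and j :: nat and w :: int
  assumes p: "prime p" and j: "j \<ge> 1" and j2: "p = 2 \<Longrightarrow> j \<ge> 2"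
  shows "\<exists>w'. (1 + int p ^ j * w) ^ p = 1 + int p ^ (j+1) * w' \<and> [w' = w] (mod int p)"
proof -
  let ?P = "int p"
  have p1: "p > 1" using p prime_gt_1_nat by blast
  have bin: "(1 + ?P ^ j * w) ^ p = (\<Sum>i\<le>p. of_nat (p choose i) * (?P ^ j * w) ^ i)"
    using binomial_ring[of "?P ^ j * w" 1 p] by (simp add: add.commute)
  have dv: "?P ^ (j+2) dvd of_nat (p choose i) * (?P ^ j * w) ^ i" if "i \<in> {2..p}" for i
  proof (cases "i = p")
    case True
    have "j + 2 \<le> p * j"
    proof (cases "p = 2")
      case True then show ?thesis using j2 by simp
    next
      case False then have "p \<ge> 3" using p1 by linarith
      then have "3 * j \<le> p * j" by simp
      then show ?thesis using j by linarith
    qed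
    then have "?P ^ (j+2) dvd ?P ^ (p*j)" by (rule le_imp_power_dvd)
    then show ?thesis using True by (simp add: power_mult_distrib power_mult[symmetric] mult.commute)
  next
    case False
    with that have ip: "i < p" "i \<noteq> 0" "i \<ge> 2" by auto
    have "p dvd (p choose i)" using dvd_choose_prime[OF ip(1) ip(2) _ p] p1 by simp
    then have d1: "?P dvd of_nat (p choose i)" by (metis int_dvd_int_iff of_nat_eq_id id_apply) 
    have "j*2 \<le> j*i" using ip by simp
    then have "j + 1 \<le> j*i" using j by linarith
    then have "?P ^ (j+1) dvd ?P ^ (j*i)" by (rule le_imp_power_dvd)
    then have d2: "?P ^ (j+1) dvd (?P ^ j * w) ^ i" by (simp add: power_mult_distrib power_mult[symmetric] dvd_mult2)
    have "?P * ?P ^ (j+1) dvd of_nat (p choose i) * (?P ^ j * w) ^ i"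
      using d1 d2 by (rule mult_dvd_mono)
    then show ?thesis by (simp add: algebra_simps)
  qed
  have split: "{..p} = {0,1} \<union> {2..p}" using p1 by auto
  have "(\<Sum>i\<le>p. of_nat (p choose i) * (?P ^ j * w) ^ i) =
        (\<Sum>i\<in>{0,1}. of_nat (p choose i) * (?P ^ j * w) ^ i) + (\<Sum>i\<in>{2..p}. of_nat (p choose i) * (?P ^ j * w) ^ i)"
    unfolding split by (rule sum.union_disjoint) auto
  moreover have "?P ^ (j+2) dvd (\<Sum>i\<in>{2..p}. of_nat (p choose i) * (?P ^ j * w) ^ i)"
    using dv by (rule dvd_sum)
  then obtain z where z: "(\<Sum>i\<in>{2..p}. of_nat (p choose i) * (?P ^ j * w) ^ i) = ?P ^ (j+2) * z"
    by blast
  ultimately have "(1 + ?P ^ j * w) ^ p = 1 + ?P ^ (j+1) * (w + ?P * z)"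
    using bin by (simp add: algebra_simps)
  moreover have "[w + ?P * z = w] (mod ?P)" by (simp add: cong_iff_dvd_diff)
  ultimately show ?thesis by blast
qed


lemma Lk:
  fixes p j n :: nat and w :: int
  assumes j: "j \<ge> 1"
  shows "\<exists>w'. (1 + int p ^ j * w) ^ n = 1 + int p ^ j * w' \<and> [w' = int n * w] (mod int p)"
proof (induction n)
  case 0
  then show ?case by (intro exI[of _ 0]) simp
next
  case (Suc n)
  then obtain w' where w': "(1 + int p ^ j * w) ^ n = 1 + int p ^ j * w'" "[w' = int n * w] (mod int p)"
    by blast
  have "(1 + int p ^ j * w) ^ Suc n = 1 + int p ^ j * (w' + w + int p ^ j * w' * w)"
    using w'(1) by (simp add: algebra_simps)
  moreover have "[w' + w + int p ^ j * w' * w = int (Suc n) * w] (mod int p)"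
  proof -
    have "int p dvd int p ^ j * w' * w" using j by (simp add: dvd_power)
    then have "[int p ^ j * w' * w = 0] (mod int p)" by (simp add: cong_0_iff)
    then have "[w' + w + int p ^ j * w' * w = int n * w + w + 0] (mod int p)"
      using w'(2) by (intro cong_add) auto
    then show ?thesis by (simp add: algebra_simps)
  qed
  ultimately show ?case by blast
qed

lemma Lpi:
  fixes p j i :: nat and w :: int
  assumes p: "prime p" and j: "j \<ge> 1" and j2: "p = 2 \<Longrightarrow> j \<ge> 2"
  shows "\<exists>w'. (1 + int p ^ j * w) ^ (p ^ i) = 1 + int p ^ (j+i) * w' \<and> [w' = w] (mod int p)"
proof (induction i)
  case 0
  then show ?case by auto
next
  case (Suc i)
  then obtain w' where w': "(1 + int p ^ j * w) ^ (p ^ i) = 1 + int p ^ (j+i) * w'" "[w' = w] (mod int p)"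
    by blast
  obtain w'' where w'': "(1 + int p ^ (j+i) * w') ^ p = 1 + int p ^ (j+i+1) * w''" "[w'' = w'] (mod int p)"
  proof -
    have "j + i \<ge> 1" "p = 2 \<Longrightarrow> j + i \<ge> 2" using j j2 by auto
    from Lp[OF p this, of w'] show ?thesis using that by blast
  qed
  have "(1 + int p ^ j * w) ^ (p ^ Suc i) = ((1 + int p ^ j * w) ^ (p ^ i)) ^ p"
    by (simp add: power_mult[symmetric] mult.commute)
  also have "\<dots> = 1 + int p ^ (j + Suc i) * w''" using w' w'' by simp
  finally show ?case using w'' w'(2) cong_trans by fastforce
qed

lemma CL:
  fixes p j k :: nat and t :: int
  assumes p: "prime p" and j: "j \<ge> 1" and j2: "p = 2 \<Longrightarrow> j \<ge> 2" and k: "k > 0"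
  shows "[(1 + int p ^ j * t) ^ k = 1 + int (k div p ^ multiplicity p k) * int p ^ (j + multiplicity p k) * t]
           (mod int p ^ (j + multiplicity p k + 1))"
proof -
  define v where "v = multiplicity p k"
  define k' where "k' = k div p ^ v"
  have kk: "k = k' * p ^ v" unfolding k'_def v_def using multiplicity_dvd[of p k] by simp
  obtain w where w: "(1 + int p ^ j * t) ^ k' = 1 + int p ^ j * w" "[w = int k' * t] (mod int p)"
    using Lk[OF j] by blast
  obtain w' where w': "(1 + int p ^ j * w) ^ (p ^ v) = 1 + int p ^ (j+v) * w'" "[w' = w] (mod int p)"
    using Lpi[OF p j j2] by blast
  have "(1 + int p ^ j * t) ^ k = 1 + int p ^ (j+v) * w'"
    using w w' kk by (simp add: power_mult)
  moreover have "[w' = int k' * t] (mod int p)" using w w' cong_trans by blast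
  then have "int p dvd w' - int k' * t" by (simp add: cong_iff_dvd_diff)
  then have "int p ^ (j+v) * int p dvd int p ^ (j+v) * (w' - int k' * t)" by (rule mult_dvd_mono[OF dvd_refl])
  then have "[1 + int p ^ (j+v) * w' = 1 + int k' * int p ^ (j+v) * t] (mod int p ^ (j+v+1))"
    by (simp add: cong_iff_dvd_diff algebra_simps)
  ultimately show ?thesis unfolding v_def k'_def by simp
qed

lemma e_add: "e q (x + y) = e q x * e q y"
  unfolding e_def by (simp add: add_divide_distrib distrib_left distrib_right exp_add)

lemma e_mult_nat: "e q (int n * x) = (e q x) ^ n"
  unfolding e_def by (simp add: exp_of_nat_mult[symmetric] mult_ac)

lemma e_zero [simp]: "e q 0 = 1"
  unfolding e_def by simp

lemma e_multiple: assumes "q > 0" shows "e q (int q * z) = 1"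
proof -
  have "2 * of_real pi * \<i> * of_int (int q * z) / of_nat q = 2 * of_int z * of_real pi * \<i>"
    using assms by (simp add: field_simps)
  then show ?thesis unfolding e_def using exp_integer_2pi[of "of_int z"] by simp
qed

lemma e_cong: assumes "q > 0" "[x = y] (mod int q)" shows "e q x = e q y"
proof -
  obtain z where "x = y + int q * z" using assms(2)
    by (metis cong_iff_lin cong_sym) 
  then show ?thesis using e_add e_multiple[OF assms(1)] by simp
qed

lemma e_one_iff: assumes "q > 0" shows "e q x = 1 \<longleftrightarrow> int q dvd x"
proof
  assume "int q dvd x"
  then obtain z where "x = int q * z" by blast
  then show "e q x = 1" using e_multiple[OF assms] by simp
next
  assume "e q x = 1"
  then obtain n :: int where n: "Im (2 * of_real pi * \<i> * of_int x / of_nat q) = of_int (2 * n) * pi"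
    unfolding e_def exp_eq_1 by blast
  have "Im (2 * of_real pi * \<i> * of_int x / of_nat q) = 2 * pi * x / q"
    by (simp add: Im_divide_of_nat)
  with n have "2 * pi * x / q = 2 * n * pi" by simp
  then have "real_of_int x = real q * n" using assms pi_gt_zero by (simp add: field_simps)
  then have "x = int q * n" by (metis of_int_eq_iff of_int_mult of_int_of_nat_eq)
  then show "int q dvd x" by simp
qed

lemma e_scale: assumes "c > 0" shows "e (c * q) (int c * x) = e q x"
  unfolding e_def using assms by (simp add: field_simps)

lemma geom_zero:
  fixes \<omega> :: complex
  assumes "\<omega> \<noteq> 1" "\<omega> ^ q = 1"
  shows "(\<Sum>t\<in>{1..q}. \<omega> ^ t) = 0"
proof -
  have "(\<Sum>t<q. \<omega> ^ t) = 0" using assms by (simp add: sum_gp_strict)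
  moreover have "(\<Sum>t\<in>{1..q}. \<omega> ^ t) = \<omega> * (\<Sum>t<q. \<omega> ^ t)"
  proof -
    have "(\<Sum>t\<in>{1..q}. \<omega> ^ t) = (\<Sum>t<q. \<omega> ^ Suc t)"
      by (rule sum.reindex_bij_witness[of _ "\<lambda>t. Suc t" "\<lambda>t. t - 1"]) auto
    then show ?thesis by (simp add: sum_distrib_left)
  qed
  ultimately show ?thesis by simp
qed

lemma char_sum:
  assumes "q > 0"
  shows "(\<Sum>t\<in>{1..q}. e q (int t * N)) = (if int q dvd N then of_nat q else 0)"
proof (cases "int q dvd N")
  case True
  then have "e q (int t * N) = 1" for t using e_one_iff[OF assms] by simp
  then show ?thesis using True by simp
next
  case False
  have "e q N \<noteq> 1" using False e_one_iff[OF assms] by simp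
  moreover have "(e q N) ^ q = 1" using e_mult_nat[of q q N] e_multiple[OF assms] by simp
  ultimately have "(\<Sum>t\<in>{1..q}. (e q N) ^ t) = 0" by (rule geom_zero)
  then show ?thesis using False by (simp add: e_mult_nat)
qed

lemma coprime_pp_iff:
  fixes p n h :: nat assumes "prime p" "n \<ge> 1"
  shows "coprime h (p ^ n) \<longleftrightarrow> \<not> p dvd h"
  by (metis assms(1,2) coprime_common_divisor_nat dual_order.strict_trans1
    dvd_power prime_imp_power_coprime prime_nat_iff'' zero_less_one)

lemma tot_pp_lt:
  fixes p n h :: nat assumes "prime p" "n \<ge> 1" "h \<in> totatives (p ^ n)"
  shows "h < p ^ n" "0 < h" "\<not> p dvd h"
proof -
  have "\<not> p dvd h" using assms coprime_pp_iff by (auto simp: totatives_def)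
  then show "\<not> p dvd h" .
  have "h \<noteq> p ^ n"
  proof
    assume "h = p ^ n"
    then have "p dvd h" using assms(2) by (simp add: dvd_power)
    then show False using \<open>\<not> p dvd h\<close> by simp
  qed
  then show "h < p ^ n" using assms(3) by (auto simp: totatives_def)
  show "0 < h" using assms(3) by (auto simp: totatives_def)
qed

lemma tot_step:
  fixes p n :: nat and f :: "nat \<Rightarrow> complex"
  assumes p: "prime p" and n: "n \<ge> 1" and per: "\<And>x y. [x = y] (mod p ^ n) \<Longrightarrow> f x = f y"
  shows "(\<Sum>h\<in>totatives (p ^ Suc n). f h) = of_nat p * (\<Sum>h\<in>totatives (p ^ n). f h)"
proof -
  define A where "A = totatives (p ^ n) \<times> {0..<p}"
  define g where "g = (\<lambda>(h, i). h + p ^ n * i)"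
  have p1: "p > 1" using p prime_gt_1_nat by blast
  have inj: "inj_on g A"
  proof (rule inj_onI)
    fix x y assume x: "x \<in> A" and y: "y \<in> A" and eq: "g x = g y"
    obtain h i where hi: "x = (h, i)" by fastforce
    obtain h' i' where hi': "y = (h', i')" by fastforce
    have hl: "h < p ^ n" "h' < p ^ n" using tot_pp_lt[OF p n] x y hi hi' by (auto simp: A_def)
    have e1: "h + p ^ n * i = h' + p ^ n * i'" using eq hi hi' by (simp add: g_def)
    then have "(h + p ^ n * i) mod p ^ n = (h' + p ^ n * i') mod p ^ n" by simp
    then have "h = h'" using hl by simp
    then have "i = i'" using e1 p1 by simp
    then show "x = y" using hi hi' \<open>h = h'\<close> by simp
  qed
  have sub: "g ` A \<subseteq> totatives (p ^ Suc n)"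
  proof
    fix y assume "y \<in> g ` A"
    then obtain h i where hi: "h \<in> totatives (p ^ n)" "i < p" "y = h + p ^ n * i"
      by (auto simp: A_def g_def)
    have hl: "h < p ^ n" "0 < h" "\<not> p dvd h" using tot_pp_lt[OF p n hi(1)] by auto
    have "(i + 1) * p ^ n \<le> p * p ^ n" using hi(2) by (intro mult_le_mono1) simp
    then have "y < p ^ Suc n" using hl hi(3) by (simp add: algebra_simps)
    moreover have "\<not> p dvd y"
    proof
      assume "p dvd y"
      moreover have "p dvd p ^ n * i" using n by (simp add: dvd_power)
      ultimately have "p dvd h" using hi(3) by (simp add: dvd_add_left_iff)
      then show False using hl by simp
    qed
    ultimately show "y \<in> totatives (p ^ Suc n)"
      using coprime_pp_iff[OF p, of "Suc n"] hl hi(3) by (auto simp: totatives_def)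
  qed
  have cardA: "card A = card (totatives (p ^ Suc n))"
  proof -
    have "card A = totient (p ^ n) * p" by (simp add: A_def card_cartesian_product totient_def)
    also have "\<dots> = totient (p ^ Suc n)"
      using totient_prime_power[OF p, of n] totient_prime_power_Suc[OF p, of n] n
      by (cases n) (auto simp: algebra_simps)
    finally show ?thesis by (simp add: totient_def)
  qed
  have img: "g ` A = totatives (p ^ Suc n)"
    using sub cardA inj by (metis card_image card_subset_eq finite_totatives)
  have "(\<Sum>h\<in>totatives (p ^ Suc n). f h) = (\<Sum>x\<in>A. f (g x))"
    using sum.reindex[OF inj, of f] img by simp
  also have "\<dots> = (\<Sum>h\<in>totatives (p ^ n). \<Sum>i\<in>{0..<p}. f (h + p ^ n * i))"
    unfolding A_def g_def by (simp add: sum.cartesian_product case_prod_unfold)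
  also have "\<dots> = (\<Sum>h\<in>totatives (p ^ n). \<Sum>i\<in>{0..<p}. f h)"
  proof (intro sum.cong refl)
    fix h i show "f (h + p ^ n * i) = f h"
      by (intro per) (simp add: cong_def)
  qed
  also have "\<dots> = of_nat p * (\<Sum>h\<in>totatives (p ^ n). f h)"
    by (simp add: sum_distrib_left)
  finally show ?thesis .
qed

lemma totient_pp_add:
  fixes p m d :: nat assumes p: "prime p" and m: "m \<ge> 1"
  shows "totient (p ^ (m + d)) = p ^ d * totient (p ^ m)"
proof -
  have "totient (p ^ (m + d)) = p ^ (m + d - 1) * (p - 1)" using totient_prime_power[OF p] m by simp
  also have "\<dots> = p ^ d * (p ^ (m - 1) * (p - 1))"
    using m by (simp add: power_add[symmetric] add.commute add_diff_assoc)
  also have "\<dots> = p ^ d * totient (p ^ m)" using totient_prime_power[OF p] m by simp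
  finally show ?thesis .
qed

lemma tot_lift1:
  fixes p m d :: nat and f :: "nat \<Rightarrow> complex"
  assumes p: "prime p" and m: "m \<ge> 1" and per: "\<And>x y. [x = y] (mod p ^ m) \<Longrightarrow> f x = f y"
  shows "(\<Sum>h\<in>totatives (p ^ (m + d)). f h) = of_nat (p ^ d) * (\<Sum>h\<in>totatives (p ^ m). f h)"
proof (induction d)
  case 0 then show ?case by simp
next
  case (Suc d)
  have per': "f x = f y" if "[x = y] (mod p ^ (m + d))" for x y
  proof (rule per)
    show "[x = y] (mod p ^ m)" using that by (rule cong_dvd_modulus_nat) (simp add: le_imp_power_dvd)
  qed
  have "(\<Sum>h\<in>totatives (p ^ (m + Suc d)). f h) = of_nat p * (\<Sum>h\<in>totatives (p ^ (m + d)). f h)"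
    using tot_step[OF p _ per', of ] m by simp
  then show ?case using Suc by simp
qed

lemma tot_lift:
  fixes p m l :: nat and f :: "nat \<Rightarrow> complex"
  assumes p: "prime p" and ml: "m \<le> l" and per: "\<And>x y. [x = y] (mod p ^ m) \<Longrightarrow> f x = f y"
  shows "(\<Sum>h\<in>totatives (p ^ l). f h) = of_nat (totient (p ^ l)) / of_nat (totient (p ^ m)) * (\<Sum>h\<in>totatives (p ^ m). f h)"
proof (cases "m = 0")
  case True
  then have fc: "f x = f 1" for x using per[of x 1] by (simp add: cong_def)
  have "(\<Sum>h\<in>totatives (p ^ l). f h) = (\<Sum>h\<in>totatives (p ^ l). f 1)"
    using fc by (intro sum.cong) auto
  then have "(\<Sum>h\<in>totatives (p ^ l). f h) = of_nat (totient (p ^ l)) * f 1"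
    by (simp add: totient_def)
  then show ?thesis using True by simp
next
  case False
  then have m: "m \<ge> 1" by simp
  obtain d where d: "l = m + d" using ml le_Suc_ex by blast
  have tp: "totient (p ^ m) > 0" using p prime_gt_0_nat by simp
  show ?thesis using tot_lift1[OF p m per, where d=d] totient_pp_add[OF p m, of d] tp d
    by (simp add: field_simps)
qed

lemma W_1: "W k 1 b = 1"
proof -
  have "totatives 1 = {1}" by (auto simp: totatives_def)
  then show ?thesis unfolding W_def using e_multiple[of 1] by (simp add: totatives_def[symmetric])
qed

lemma W_lift:
  fixes p m l k :: nat and c :: int
  assumes p: "prime p" and ml: "m \<le> l"
  shows "(\<Sum>h\<in>totatives (p ^ l). e (p ^ l) (int (p ^ (l - m)) * c * int h ^ k))
          = of_nat (totient (p ^ l)) / of_nat (totient (p ^ m)) * W k (p ^ m) c"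
proof -
  have p0: "p > 0" using p prime_gt_0_nat by blast
  have pl: "p ^ l = p ^ (l - m) * p ^ m" using ml by (simp add: power_add[symmetric])
  have sc: "e (p ^ l) (int (p ^ (l - m)) * c * int h ^ k) = e (p ^ m) (c * int h ^ k)" for h
    unfolding pl using e_scale[of "p ^ (l - m)" "p ^ m" "c * int h ^ k"] p0 by (simp add: mult.assoc)
  have per: "e (p ^ m) (c * int x ^ k) = e (p ^ m) (c * int y ^ k)" if "[x = y] (mod p ^ m)" for x y
  proof (rule e_cong)
    show "p ^ m > 0" using p0 by simp
    have "[int x = int y] (mod int (p ^ m))" using that by (simp only: cong_int_iff)
    then show "[c * int x ^ k = c * int y ^ k] (mod int (p ^ m))" by (intro cong_mult cong_pow) auto
  qed
  have "(\<Sum>h\<in>totatives (p ^ l). e (p ^ l) (int (p ^ (l - m)) * c * int h ^ k))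
        = (\<Sum>h\<in>totatives (p ^ l). e (p ^ m) (c * int h ^ k))" using sc by simp
  also have "\<dots> = of_nat (totient (p ^ l)) / of_nat (totient (p ^ m)) *
                  (\<Sum>h\<in>totatives (p ^ m). e (p ^ m) (c * int h ^ k))"
    by (rule tot_lift[OF p ml per])
  also have "(\<Sum>h\<in>totatives (p ^ m). e (p ^ m) (c * int h ^ k)) = W k (p ^ m) c"
    unfolding W_def totatives_def by (intro sum.cong) auto
  finally show ?thesis .
qed

lemma perm_tot:
  fixes p m c :: nat and F :: "nat \<Rightarrow> complex"
  assumes p: "prime p" and m: "m \<ge> 1" and c: "\<not> p dvd c"
  shows "(\<Sum>h\<in>totatives (p ^ m). F ((h * c) mod p ^ m)) = (\<Sum>h\<in>totatives (p ^ m). F h)"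
proof -
  define g where "g = (\<lambda>h. (h * c) mod p ^ m)"
  have pdv: "p dvd p ^ m" using m by (simp add: dvd_power)
  have ndv: "\<not> p dvd g h" if "h \<in> totatives (p ^ m)" for h
  proof
    assume "p dvd g h"
    moreover have "p dvd p ^ m * (h * c div p ^ m)" using pdv by simp
    ultimately have "p dvd h * c" unfolding g_def by (metis div_mult_mod_eq dvd_add mult.commute)
    then show False using tot_pp_lt[OF p m that] c p by (simp add: prime_dvd_mult_iff)
  qed
  have sub: "g ` totatives (p ^ m) \<subseteq> totatives (p ^ m)"
  proof
    fix y assume "y \<in> g ` totatives (p ^ m)"
    then obtain h where h: "h \<in> totatives (p ^ m)" "y = g h" by blast
    have "y \<noteq> 0" using ndv[OF h(1)] h(2) by (metis dvd_0_right)
    moreover have "y < p ^ m" using h(2) p prime_gt_0_nat unfolding g_def by simp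
    moreover have "coprime y (p ^ m)" using coprime_pp_iff[OF p m] ndv[OF h(1)] h(2) by simp
    ultimately show "y \<in> totatives (p ^ m)" by (simp add: totatives_def del: of_nat_power)
  qed
  have inj: "inj_on g (totatives (p ^ m))"
  proof (rule inj_onI)
    fix x y assume x: "x \<in> totatives (p ^ m)" and y: "y \<in> totatives (p ^ m)" and eq: "g x = g y"
    have "[x * c = y * c] (mod p ^ m)" using eq by (simp add: g_def cong_def)
    moreover have "coprime c (p ^ m)" using coprime_pp_iff[OF p m] c by blast
    ultimately have "[x = y] (mod p ^ m)" using cong_mult_rcancel_nat by blast
    then show "x = y" using tot_pp_lt[OF p m x] tot_pp_lt[OF p m y] by (simp add: cong_def)
  qed
  have img: "g ` totatives (p ^ m) = totatives (p ^ m)"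
    using sub inj by (metis card_image card_subset_eq finite_totatives)
  show ?thesis using sum.reindex[OF inj, of F] img by (simp add: g_def)
qed

lemma W_tot: "W k q b = (\<Sum>h\<in>totatives q. e q (b * int h ^ k))"
  unfolding W_def totatives_def by (intro sum.cong) auto

lemma W_vanish:
  fixes p k m :: nat and b :: int
  assumes p: "prime p" and k: "k > 0" and m: "m \<ge> xi k p + 1" and b: "\<not> int p dvd b"
  shows "W k (p ^ m) b = 0"
proof -
  define v where "v = multiplicity p k"
  define k' where "k' = k div p ^ v"
  define j where "j = m - v - 1"
  have j1: "j \<ge> 1" and j2: "p = 2 \<Longrightarrow> j \<ge> 2" and mj: "m = j + v + 1"
    using m unfolding j_def v_def xi_def nu_def by (auto split: if_splits)
  have p0: "p > 0" using p prime_gt_0_nat by blast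
  have q0: "p ^ m > 0" using p0 by simp
  have k'p: "\<not> p dvd k'" unfolding k'_def v_def
    by (rule multiplicity_decompose) (use k p in \<open>auto simp: prime_gt_1_nat\<close>)
  have pint: "prime (int p)" using p by simp
  define F where "F = (\<lambda>h. e (p ^ m) (b * int h ^ k))"
  define N where "N = (\<lambda>h::nat. b * int h ^ k * int k')"
  have Wt: "W k (p ^ m) b = (\<Sum>h\<in>totatives (p ^ m). F h * e p (int t * N h))" if t: "t \<in> {1..p}" for t
  proof -
    define c where "c = 1 + p ^ j * t"
    have cp: "\<not> p dvd c"
    proof
      assume "p dvd c"
      moreover have "p dvd p ^ j * t" using j1 by (simp add: dvd_power)
      ultimately have "p dvd 1" unfolding c_def by (metis dvd_add_left_iff)
      then show False using p by simp
    qed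
    have "W k (p ^ m) b = (\<Sum>h\<in>totatives (p ^ m). F h)" unfolding W_tot F_def ..
    also have "\<dots> = (\<Sum>h\<in>totatives (p ^ m). F ((h * c) mod p ^ m))"
      using perm_tot[OF p _ cp, of m F] mj by simp
    also have "\<dots> = (\<Sum>h\<in>totatives (p ^ m). F h * e p (int t * N h))"
    proof (intro sum.cong refl)
      fix h
      have CLt: "[(1 + int p ^ j * int t) ^ k = 1 + int k' * int p ^ (j + v) * int t] (mod int p ^ (j + v + 1))"
        using CL[OF p j1 j2 k, of "int t"] unfolding k'_def v_def by simp
      have ic: "int c = 1 + int p ^ j * int t" by (simp add: c_def)
      have "[int ((h * c) mod p ^ m) = int h * int c] (mod int (p ^ m))"
        by (simp add: cong_def zmod_int of_nat_mult)
      then have "[int ((h * c) mod p ^ m) ^ k = (int h * int c) ^ k] (mod int (p ^ m))"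
        by (rule cong_pow)
      then have "[b * int ((h * c) mod p ^ m) ^ k = b * (int h * int c) ^ k] (mod int (p ^ m))"
        by (rule cong_scalar_left)
      then have "[b * int ((h * c) mod p ^ m) ^ k = b * int h ^ k * (1 + int p ^ j * int t) ^ k] (mod int (p ^ m))"
        by (simp only: ic power_mult_distrib mult.assoc)
      moreover have "[b * int h ^ k * (1 + int p ^ j * int t) ^ k = b * int h ^ k * (1 + int k' * int p ^ (j + v) * int t)] (mod int (p ^ m))"
        using CLt mj by (intro cong_mult cong_refl) simp
      ultimately have "F ((h * c) mod p ^ m) = e (p ^ m) (b * int h ^ k * (1 + int k' * int p ^ (j + v) * int t))"
        unfolding F_def using q0 by (metis cong_trans e_cong)
      also have "b * int h ^ k * (1 + int k' * int p ^ (j + v) * int t) = b * int h ^ k + int (p ^ (j + v)) * (int t * N h)"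
        unfolding N_def by (simp add: algebra_simps)
      also have "e (p ^ m) (b * int h ^ k + int (p ^ (j + v)) * (int t * N h)) = F h * e (p ^ m) (int (p ^ (j + v)) * (int t * N h))"
        unfolding F_def by (rule e_add)
      also have "e (p ^ m) (int (p ^ (j + v)) * (int t * N h)) = e p (int t * N h)"
        using e_scale[of "p ^ (j + v)" p "int t * N h"] p0 mj by (simp add: mult.commute)
      finally show "F ((h * c) mod p ^ m) = F h * e p (int t * N h)" .
    qed
    finally show ?thesis .
  qed
  have "of_nat p * W k (p ^ m) b = (\<Sum>t\<in>{1..p}. W k (p ^ m) b)" by simp
  also have "\<dots> = (\<Sum>t\<in>{1..p}. \<Sum>h\<in>totatives (p ^ m). F h * e p (int t * N h))"
    using Wt by (intro sum.cong) auto
  also have "\<dots> = (\<Sum>h\<in>totatives (p ^ m). F h * (\<Sum>t\<in>{1..p}. e p (int t * N h)))"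
    by (subst sum.swap) (simp add: sum_distrib_left)
  also have "\<dots> = 0"
  proof (intro sum.neutral ballI)
    fix h assume h: "h \<in> totatives (p ^ m)"
    have "\<not> p dvd h" using tot_pp_lt[OF p _ h] mj by simp
    then have "\<not> int p dvd int h" by simp
    moreover have "\<not> int p dvd int k'" using k'p by simp
    ultimately have "\<not> int p dvd N h" unfolding N_def using b pint
      by (simp add: prime_dvd_mult_iff prime_dvd_power_iff k)
    then show "F h * (\<Sum>t\<in>{1..p}. e p (int t * N h)) = 0" using char_sum[OF p0] by simp
  qed
  finally show ?thesis using p0 by simp
qed

lemma e_sum: "finite I \<Longrightarrow> e q (\<Sum>j\<in>I. f j) = (\<Prod>j\<in>I. e q (f j))"
  by (induction I rule: finite_induct) (simp_all add: e_add)

lemma U0_tot: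
  fixes q :: nat and f :: "nat \<Rightarrow> complex"
  assumes q: "q > 0" and per: "\<And>x y. [x = y] (mod q) \<Longrightarrow> f x = f y"
  shows "(\<Sum>h\<in>{y\<in>{0..<q}. coprime y q}. f h) = (\<Sum>h\<in>totatives q. f h)"
proof (rule sum.reindex_bij_witness[of _ "\<lambda>h. h mod q" "\<lambda>h. if h = 0 then q else h"])
  fix a assume a: "a \<in> {y\<in>{0..<q}. coprime y q}"
  show "(if a = 0 then q else a) mod q = a" using a by auto
  show "(if a = 0 then q else a) \<in> totatives q" using a q by (auto simp: totatives_def)
  show "f (if a = 0 then q else a) = f a" using a by (intro per) (auto simp: cong_def)
next
  fix b assume b: "b \<in> totatives q"
  show "b mod q \<in> {y\<in>{0..<q}. coprime y q}" using b q by (auto simp: totatives_def)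
  show "(if b mod q = 0 then q else b mod q) = b" using b by (auto simp: totatives_def dest: le_neq_implies_less)
qed

lemma decomp:
  fixes p l :: nat and G :: "nat \<Rightarrow> complex"
  assumes p: "prime p"
  shows "(\<Sum>t\<in>{1..p ^ l}. G t) = (\<Sum>m\<in>{0..l}. \<Sum>r\<in>totatives (p ^ m). G (p ^ (l - m) * r))"
proof (induction l arbitrary: G)
  case 0
  have "totatives 1 = {1}" by (auto simp: totatives_def)
  then show ?case by simp
next
  case (Suc l)
  have p0: "p > 0" using p prime_gt_0_nat by blast
  have split: "{1..p ^ Suc l} = totatives (p ^ Suc l) \<union> (\<lambda>t. p * t) ` {1..p ^ l}"
  proof (intro equalityI subsetI)
    fix t assume t: "t \<in> {1..p ^ Suc l}"
    show "t \<in> totatives (p ^ Suc l) \<union> (\<lambda>t. p * t) ` {1..p ^ l}"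
    proof (cases "p dvd t")
      case True
      then obtain t' where t': "t = p * t'" by blast
      then have "t' \<in> {1..p ^ l}" using t p0 by auto
      then show ?thesis using t' by blast
    next
      case False
      then have "coprime t (p ^ Suc l)" using coprime_pp_iff[OF p, of "Suc l" t] by simp
      then have "t \<in> totatives (p ^ Suc l)" using t unfolding totatives_def by simp
      then show ?thesis by blast
    qed
  next
    fix t assume "t \<in> totatives (p ^ Suc l) \<union> (\<lambda>t. p * t) ` {1..p ^ l}"
    then consider "t \<in> totatives (p ^ Suc l)" | t' where "t' \<in> {1..p ^ l}" "t = p * t'" by blast
    then show "t \<in> {1..p ^ Suc l}"
    proof cases
      case 1 then show ?thesis unfolding totatives_def by simp
    next
      case 2 then show ?thesis using p0 by simp
    qed
  qed
  have disj: "totatives (p ^ Suc l) \<inter> (\<lambda>t. p * t) ` {1..p ^ l} = {}"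
  proof (rule ccontr)
    assume "totatives (p ^ Suc l) \<inter> (\<lambda>t. p * t) ` {1..p ^ l} \<noteq> {}"
    then obtain t' where "p * t' \<in> totatives (p ^ Suc l)" by blast
    then have "coprime (p * t') (p ^ Suc l)" unfolding totatives_def by simp
    then have "\<not> p dvd p * t'" using coprime_pp_iff[OF p, of "Suc l" "p * t'"] by simp
    then show False by simp
  qed
  have inj: "inj_on (\<lambda>t. p * t) {1..p ^ l}" using p0 by (auto simp: inj_on_def)
  have "(\<Sum>t\<in>{1..p ^ Suc l}. G t) = (\<Sum>t\<in>totatives (p ^ Suc l). G t) + (\<Sum>t\<in>(\<lambda>t. p * t) ` {1..p ^ l}. G t)"
    unfolding split by (rule sum.union_disjoint) (use disj in simp_all)
  also have "(\<Sum>t\<in>(\<lambda>t. p * t) ` {1..p ^ l}. G t) = (\<Sum>t\<in>{1..p ^ l}. G (p * t))"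
    using sum.reindex[OF inj, of G] by simp
  also have "\<dots> = (\<Sum>m\<in>{0..l}. \<Sum>r\<in>totatives (p ^ m). G (p * (p ^ (l - m) * r)))"
    using Suc.IH[of "\<lambda>t. G (p * t)"] by simp
  also have "\<dots> = (\<Sum>m\<in>{0..l}. \<Sum>r\<in>totatives (p ^ m). G (p ^ (Suc l - m) * r))"
    by (intro sum.cong refl) (simp add: Suc_diff_le mult.assoc)
  finally show ?case by (simp add: sum.atLeast0_atMost_Suc add.commute)
qed

lemma orth:
  fixes k s p l :: nat and a :: "nat \<Rightarrow> int"
  assumes p: "prime p"
  shows "(\<Sum>m\<in>{0..l}. T k s a (p ^ m)) =
           of_nat (p ^ l) * of_nat (M k s a (p ^ l)) / of_nat (totient (p ^ l)) ^ s"
proof -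
  define q where "q = p ^ l"
  define I where "I = {1..s}"
  define U0 where "U0 = {y\<in>{0..<q}. coprime y q}"
  define S where "S = (\<lambda>x::nat\<Rightarrow>nat. \<Sum>j\<in>I. a j * int (x j) ^ k)"
  define G where "G = (\<lambda>t::nat. \<Prod>j\<in>I. \<Sum>h\<in>totatives q. e q (int t * (a j * int h ^ k)))"
  have p0: "p > 0" using p prime_gt_0_nat by blast
  have q0: "q > 0" unfolding q_def using p0 by simp
  have finI: "finite I" unfolding I_def by simp
  have finU: "finite U0" unfolding U0_def by simp
  have finP: "finite (PiE I (\<lambda>_. U0))" using finI finU by (simp add: finite_PiE)
  have step1: "of_nat q * of_nat (M k s a q) = (\<Sum>x\<in>PiE I (\<lambda>_. U0). \<Sum>t\<in>{1..q}. e q (int t * S x))"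
  proof -
    have "(\<Sum>x\<in>PiE I (\<lambda>_. U0). \<Sum>t\<in>{1..q}. e q (int t * S x))
          = (\<Sum>x\<in>PiE I (\<lambda>_. U0). if int q dvd S x then (of_nat q :: complex) else 0)"
      using char_sum[OF q0] by simp
    also have "\<dots> = (\<Sum>x\<in>{x\<in>PiE I (\<lambda>_. U0). int q dvd S x}. (of_nat q :: complex))"
      using sum.inter_filter[OF finP, of "\<lambda>_. (of_nat q :: complex)" "\<lambda>x. int q dvd S x"] by simp
    also have "\<dots> = of_nat (card {x\<in>PiE I (\<lambda>_. U0). int q dvd S x}) * of_nat q" by simp
    also have "card {x\<in>PiE I (\<lambda>_. U0). int q dvd S x} = M k s a q"
      unfolding M_def I_def U0_def S_def by simp
    finally show ?thesis by simp
  qed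
  have step2: "(\<Sum>x\<in>PiE I (\<lambda>_. U0). \<Sum>t\<in>{1..q}. e q (int t * S x)) = (\<Sum>t\<in>{1..q}. G t)"
  proof -
    have "(\<Sum>x\<in>PiE I (\<lambda>_. U0). \<Sum>t\<in>{1..q}. e q (int t * S x))
          = (\<Sum>t\<in>{1..q}. \<Sum>x\<in>PiE I (\<lambda>_. U0). e q (int t * S x))" by (rule sum.swap)
    also have "\<dots> = (\<Sum>t\<in>{1..q}. \<Sum>x\<in>PiE I (\<lambda>_. U0). \<Prod>j\<in>I. e q (int t * (a j * int (x j) ^ k)))"
      unfolding S_def by (simp add: sum_distrib_left e_sum[OF finI])
    also have "\<dots> = (\<Sum>t\<in>{1..q}. \<Prod>j\<in>I. \<Sum>h\<in>U0. e q (int t * (a j * int h ^ k)))"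
    proof (rule sum.cong[OF refl])
      fix t
      show "(\<Sum>x\<in>PiE I (\<lambda>_. U0). \<Prod>j\<in>I. e q (int t * (a j * int (x j) ^ k)))
            = (\<Prod>j\<in>I. \<Sum>h\<in>U0. e q (int t * (a j * int h ^ k)))"
        by (rule prod_sum_PiE[OF finI finU, symmetric])
    qed
    also have "\<dots> = (\<Sum>t\<in>{1..q}. G t)"
      unfolding G_def U0_def
    proof (rule sum.cong[OF refl], rule prod.cong[OF refl], rule U0_tot[OF q0])
      fix t j x y assume "[x = y] (mod q)"
      then have "[int x = int y] (mod int q)" by (simp only: cong_int_iff)
      then have "[int t * (a j * int x ^ k) = int t * (a j * int y ^ k)] (mod int q)"
        by (intro cong_mult cong_pow cong_refl)
      then show "e q (int t * (a j * int x ^ k)) = e q (int t * (a j * int y ^ k))"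
        by (rule e_cong[OF q0])
    qed
    finally show ?thesis .
  qed
  have step3: "(\<Sum>t\<in>{1..q}. G t) = (\<Sum>m\<in>{0..l}. \<Sum>r\<in>totatives (p ^ m). G (p ^ (l - m) * r))"
    unfolding q_def by (rule decomp[OF p])
  have step4: "(\<Sum>r\<in>totatives (p ^ m). G (p ^ (l - m) * r)) = of_nat (totient q) ^ s * T k s a (p ^ m)"
    if m: "m \<in> {0..l}" for m
  proof -
    define c where "c = (of_nat (totient q) / of_nat (totient (p ^ m)) :: complex)"
    have tm: "totient (p ^ m) > 0" using p0 by simp
    have "G (p ^ (l - m) * r) = (\<Prod>j\<in>I. c * W k (p ^ m) (a j * int r))" for r
      unfolding G_def
    proof (intro prod.cong refl)
      fix j
      have "(\<Sum>h\<in>totatives q. e q (int (p ^ (l - m) * r) * (a j * int h ^ k)))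
          = (\<Sum>h\<in>totatives (p ^ l). e (p ^ l) (int (p ^ (l - m)) * (a j * int r) * int h ^ k))"
        unfolding q_def by (intro sum.cong refl) (simp add: algebra_simps)
      also have "\<dots> = c * W k (p ^ m) (a j * int r)"
        unfolding c_def q_def using W_lift[OF p, of m l "a j * int r" k] m by simp
      finally show "(\<Sum>h\<in>totatives q. e q (int (p ^ (l - m) * r) * (a j * int h ^ k))) = c * W k (p ^ m) (a j * int r)" .
    qed
    then have "(\<Sum>r\<in>totatives (p ^ m). G (p ^ (l - m) * r))
             = (\<Sum>r\<in>totatives (p ^ m). c ^ s * (\<Prod>j\<in>I. W k (p ^ m) (a j * int r)))"
      by (simp add: prod.distrib I_def)
    also have "\<dots> = c ^ s * (\<Sum>r\<in>{r\<in>{1..p ^ m}. coprime r (p ^ m)}. \<Prod>j\<in>{1..s}. W k (p ^ m) (a j * int r))"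
    proof -
      have "totatives (p ^ m) = {r\<in>{1..p ^ m}. coprime r (p ^ m)}" by (auto simp: totatives_def)
      then show ?thesis by (simp add: sum_distrib_left I_def)
    qed
    also have "\<dots> = of_nat (totient q) ^ s * T k s a (p ^ m)"
      unfolding T_def c_def using tm by (simp add: power_divide)
    finally show ?thesis .
  qed
  have "of_nat q * of_nat (M k s a q) = of_nat (totient q) ^ s * (\<Sum>m\<in>{0..l}. T k s a (p ^ m))"
    using step1 step2 step3 step4 by (simp add: sum_distrib_left)
  moreover have "totient q > 0" using q0 by simp
  ultimately show ?thesis using p0 unfolding q_def by (simp add: field_simps)
qed

lemma T_vanish:
  fixes p k s m :: nat and a :: "nat \<Rightarrow> int"
  assumes p: "prime p" and k: "k > 0" and g: "\<not> int p dvd Gcd (a ` {1..s})" and m: "m \<ge> xi k p + 1"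
  shows "T k s a (p ^ m) = 0"
proof -
  obtain j0 where j0: "j0 \<in> {1..s}" "\<not> int p dvd a j0" using g by (auto simp: dvd_Gcd_iff)
  have m1: "m \<ge> 1" using m by simp
  have z: "(\<Prod>j\<in>{1..s}. W k (p ^ m) (a j * int r)) = 0" if r: "r \<in> {r\<in>{1..p ^ m}. coprime r (p ^ m)}" for r
  proof -
    have "\<not> p dvd r" using r coprime_pp_iff[OF p m1] by simp
    then have "\<not> int p dvd a j0 * int r" using j0(2) p by (simp add: prime_dvd_mult_iff)
    then have "W k (p ^ m) (a j0 * int r) = 0" by (rule W_vanish[OF p k m])
    then show ?thesis using j0(1) by (metis finite_atLeastAtMost prod_zero)
  qed
  have "(\<Sum>r\<in>{r\<in>{1..p ^ m}. coprime r (p ^ m)}. \<Prod>j\<in>{1..s}. W k (p ^ m) (a j * int r)) = 0"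
    using z by (intro sum.neutral) blast
  then show ?thesis unfolding T_def by simp
qed

lemma sum_T_const:
  fixes p k s l :: nat and a :: "nat \<Rightarrow> int"
  assumes p: "prime p" and k: "k > 0" and g: "\<not> int p dvd Gcd (a ` {1..s})" and l: "l \<ge> xi k p"
  shows "(\<Sum>m\<in>{0..l}. T k s a (p ^ m)) = (\<Sum>m\<in>{0..xi k p}. T k s a (p ^ m))"
proof -
  obtain d where d: "l = xi k p + d" using l le_Suc_ex by blast
  have "(\<Sum>m\<in>{0..xi k p + d}. T k s a (p ^ m)) = (\<Sum>m\<in>{0..xi k p}. T k s a (p ^ m))" for d
  proof (induction d)
    case 0 then show ?case by simp
  next
    case (Suc d)
    have "T k s a (p ^ Suc (xi k p + d)) = 0" by (rule T_vanish[OF p k g]) simp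
    then show ?case using Suc by (simp add: sum.atLeast0_atMost_Suc)
  qed
  then show ?thesis using d by simp
qed

lemma coprime_int_prime_iff:
  fixes p :: nat and x :: int assumes p: "prime p"
  shows "coprime x (int p) \<longleftrightarrow> \<not> int p dvd x"
proof -
  have "prime (int p)" using p by simp
  then show ?thesis by (metis coprime_commute prime_imp_coprime coprime_common_divisor dvd_refl not_prime_unit)
qed

lemma hensel_step:
  fixes p k n j0 :: nat and a :: "nat \<Rightarrow> int" and I :: "nat set" and y :: "nat \<Rightarrow> int"
  assumes p: "prime p" and k: "k > 0" and fin: "finite I" and j0: "j0 \<in> I" "\<not> int p dvd a j0"
    and n: "n \<ge> xi k p"
    and cop: "\<forall>j\<in>I. coprime (y j) (int p)"
    and dv: "int p ^ n dvd (\<Sum>j\<in>I. a j * y j ^ k)"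
  shows "\<exists>y'. (\<forall>j\<in>I. [y' j = y j] (mod int p ^ (n - multiplicity p k))) \<and>
              (\<forall>j\<in>I. coprime (y' j) (int p)) \<and>
              int p ^ (n + 1) dvd (\<Sum>j\<in>I. a j * y' j ^ k)"
proof -
  define v where "v = multiplicity p k"
  define k' where "k' = k div p ^ v"
  define jj where "jj = n - v"
  have j1: "jj \<ge> 1" and j2: "p = 2 \<Longrightarrow> jj \<ge> 2" and nj: "n = jj + v"
    using n unfolding jj_def v_def xi_def nu_def by (auto split: if_splits)
  have pint: "prime (int p)" using p by simp
  have k'p: "\<not> p dvd k'" unfolding k'_def v_def
    by (rule multiplicity_decompose) (use k p in \<open>auto simp: prime_gt_1_nat\<close>)
  define R where "R = (\<Sum>j\<in>I - {j0}. a j * y j ^ k)"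
  define S where "S = (\<Sum>j\<in>I. a j * y j ^ k)"
  have SR: "S = R + a j0 * y j0 ^ k" unfolding S_def R_def
    using sum.remove[OF fin j0(1), of "\<lambda>j. a j * y j ^ k"] by simp
  obtain \<sigma> where \<sigma>: "S = int p ^ n * \<sigma>" using dv unfolding S_def by blast
  define c where "c = a j0 * y j0 ^ k * int k'"
  have "\<not> int p dvd c"
  proof -
    have "\<not> int p dvd y j0" using cop j0(1) coprime_int_prime_iff[OF p] by blast
    moreover have "\<not> int p dvd int k'" using k'p by simp
    ultimately show ?thesis unfolding c_def using j0(2) pint k
      by (simp add: prime_dvd_mult_iff prime_dvd_power_iff)
  qed
  then have "coprime c (int p)" using coprime_int_prime_iff[OF p] by blast
  then obtain x where x: "[c * x = 1] (mod int p)" using cong_solve_coprime_int by blast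
  define t where "t = - \<sigma> * x"
  have ct: "int p dvd \<sigma> + c * t"
  proof -
    have "[\<sigma> * (c * x) = \<sigma> * 1] (mod int p)" using x by (rule cong_scalar_left)
    then have "int p dvd \<sigma> * (c * x) - \<sigma>" by (simp add: cong_iff_dvd_diff)
    moreover have "\<sigma> + c * t = - (\<sigma> * (c * x) - \<sigma>)" unfolding t_def by (simp add: algebra_simps)
    ultimately show ?thesis by (metis dvd_minus_iff)
  qed
  define u where "u = 1 + int p ^ jj * t"
  define y' where "y' = y(j0 := y j0 * u)"
  have CLt: "[u ^ k = 1 + int k' * int p ^ n * t] (mod int p ^ (n + 1))"
    using CL[OF p j1 j2 k, of t] unfolding u_def k'_def v_def nj by simp
  have S': "(\<Sum>j\<in>I. a j * y' j ^ k) = R + a j0 * y j0 ^ k * u ^ k"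
  proof -
    have "(\<Sum>j\<in>I. a j * y' j ^ k) = a j0 * y' j0 ^ k + (\<Sum>j\<in>I - {j0}. a j * y' j ^ k)"
      using sum.remove[OF fin j0(1), of "\<lambda>j. a j * y' j ^ k"] by simp
    also have "(\<Sum>j\<in>I - {j0}. a j * y' j ^ k) = R" unfolding R_def y'_def by (intro sum.cong) auto
    finally show ?thesis unfolding y'_def by (simp add: power_mult_distrib algebra_simps)
  qed
  have "[R + a j0 * y j0 ^ k * u ^ k = R + a j0 * y j0 ^ k * (1 + int k' * int p ^ n * t)] (mod int p ^ (n + 1))"
    using CLt by (intro cong_add cong_mult cong_refl)
  moreover have "R + a j0 * y j0 ^ k * (1 + int k' * int p ^ n * t) = int p ^ n * (\<sigma> + c * t)"
    using SR \<sigma> unfolding c_def by (simp add: algebra_simps)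
  moreover have "int p ^ (n + 1) dvd int p ^ n * (\<sigma> + c * t)" using ct by simp
  ultimately have d1: "int p ^ (n + 1) dvd (\<Sum>j\<in>I. a j * y' j ^ k)"
    unfolding S' by (metis cong_dvd_iff)
  have ucop: "coprime u (int p)"
  proof -
    have "int p dvd int p ^ jj * t" using j1 by (simp add: dvd_power)
    then have "\<not> int p dvd u" unfolding u_def using pint
      by (metis dvd_add_right_iff add.commute not_prime_unit)
    then show ?thesis using coprime_int_prime_iff[OF p] by blast
  qed
  have c1: "\<forall>j\<in>I. coprime (y' j) (int p)" using cop ucop unfolding y'_def by auto
  have c2: "\<forall>j\<in>I. [y' j = y j] (mod int p ^ (n - multiplicity p k))"
  proof
    fix j assume "j \<in> I"
    show "[y' j = y j] (mod int p ^ (n - multiplicity p k))"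
    proof (cases "j = j0")
      case True
      have "y j0 * u - y j0 = int p ^ jj * (y j0 * t)" unfolding u_def by (simp add: algebra_simps)
      then show ?thesis using True unfolding y'_def jj_def v_def
        by (simp add: cong_iff_dvd_diff cong_sym_eq)
    next
      case False then show ?thesis unfolding y'_def by simp
    qed
  qed
  show ?thesis using c1 c2 d1 by blast
qed

theorem lemma2p5:
  fixes k s p :: nat and a :: "nat \<Rightarrow> int"
  assumes "k > 0" and "s > 0"
    and "\<forall>j\<in>{1..s}. a j \<noteq> 0"
    and "prime p"
    and "\<not> int p dvd Gcd (a ` {1..s})"
  shows "((\<lambda>n. real p ^ n * real (M k s a (p ^ n)) / real (totient (p ^ n)) ^ s)
            \<longlonglongrightarrow> chi k s a p) \<and>
         (\<forall>l \<ge> xi k p.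
           of_real (chi k s a p) = (\<Sum>m\<in>{0..l}. T k s a (p ^ m)) \<and>
           (\<Sum>m\<in>{0..l}. T k s a (p ^ m)) = (\<Sum>m\<in>{0..xi k p}. T k s a (p ^ m)) \<and>
           (\<Sum>m\<in>{0..xi k p}. T k s a (p ^ m)) =
             of_real (real p ^ xi k p * real (M k s a (p ^ xi k p))
                        / real (totient (p ^ xi k p)) ^ s)) \<and>
         (M k s a (p ^ xi k p) > 0 \<longrightarrow>
           padic_unit_solution k s a p \<and>
           chi k s a p \<ge> 1 / real p ^ ((s - 1) * xi k p) \<and>
           1 / real p ^ ((s - 1) * xi k p) > 0)"
proof -
  note k = assms(1) and s = assms(2) and p = assms(4) and g = assms(5)
  define X where "X = xi k p"
  define f where "f = (\<lambda>n. real p ^ n * real (M k s a (p ^ n)) / real (totient (p ^ n)) ^ s)"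
  have p0: "p > 0" using p prime_gt_0_nat by blast
  have fT: "complex_of_real (f n) = (\<Sum>m\<in>{0..n}. T k s a (p ^ m))" for n
    using orth[OF p, of k s a n] unfolding f_def by simp
  have fc: "f n = f X" if "n \<ge> X" for n
  proof -
    have "complex_of_real (f n) = complex_of_real (f X)"
      using fT[of n] fT[of X] sum_T_const[OF p k g, of n] that unfolding X_def by simp
    then show ?thesis by simp
  qed
  have lim: "f \<longlonglongrightarrow> f X"
  proof -
    have "eventually (\<lambda>n. f n = f X) sequentially"
      unfolding eventually_sequentially using fc by blast
    then show ?thesis by (rule tendsto_eventually)
  qed
  have chi: "chi k s a p = f X"
  proof -
    have "chi k s a p = lim f" unfolding chi_def f_def ..
    then show ?thesis using lim by (simp add: limI)
  qed
  have part1: "(\<lambda>n. real p ^ n * real (M k s a (p ^ n)) / real (totient (p ^ n)) ^ s) \<longlonglongrightarrow> chi k s a p"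
    using lim chi unfolding f_def by simp
  have part2: "\<forall>l \<ge> xi k p.
           of_real (chi k s a p) = (\<Sum>m\<in>{0..l}. T k s a (p ^ m)) \<and>
           (\<Sum>m\<in>{0..l}. T k s a (p ^ m)) = (\<Sum>m\<in>{0..xi k p}. T k s a (p ^ m)) \<and>
           (\<Sum>m\<in>{0..xi k p}. T k s a (p ^ m)) =
             of_real (real p ^ xi k p * real (M k s a (p ^ xi k p))
                        / real (totient (p ^ xi k p)) ^ s)"
  proof (intro allI impI conjI)
    fix l assume l: "l \<ge> xi k p"
    show "of_real (chi k s a p) = (\<Sum>m\<in>{0..l}. T k s a (p ^ m))"
      using chi fc[of l] fT[of l] l unfolding X_def by simp
    show "(\<Sum>m\<in>{0..l}. T k s a (p ^ m)) = (\<Sum>m\<in>{0..xi k p}. T k s a (p ^ m))"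
      by (rule sum_T_const[OF p k g l])
    show "(\<Sum>m\<in>{0..xi k p}. T k s a (p ^ m)) =
             of_real (real p ^ xi k p * real (M k s a (p ^ xi k p))
                        / real (totient (p ^ xi k p)) ^ s)"
      using fT[of "xi k p"] unfolding f_def by simp
  qed
  have part3: "padic_unit_solution k s a p \<and>
           chi k s a p \<ge> 1 / real p ^ ((s - 1) * xi k p) \<and>
           1 / real p ^ ((s - 1) * xi k p) > 0" if Mpos: "M k s a (p ^ xi k p) > 0"
  proof (intro conjI)
    show "1 / real p ^ ((s - 1) * xi k p) > 0" using p0 by simp
  next
    have tpos: "0 < real (totient (p ^ X))" using p0 by simp
    have tle: "real (totient (p ^ X)) \<le> real p ^ X" using totient_le[of "p ^ X"] by simp
    have "real p ^ X * 1 / (real p ^ X) ^ s \<le> real p ^ X * real (M k s a (p ^ X)) / real (totient (p ^ X)) ^ s"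
    proof (rule frac_le)
      show "0 \<le> real p ^ X * real (M k s a (p ^ X))" by simp
      show "real p ^ X * 1 \<le> real p ^ X * real (M k s a (p ^ X))"
      proof -
        have m1: "(1::real) \<le> real (M k s a (p ^ X))" using Mpos unfolding X_def by simp
        show ?thesis using mult_left_mono[OF m1, of "real p ^ X"] by simp
      qed
      show "0 < real (totient (p ^ X)) ^ s" using tpos by simp
      show "real (totient (p ^ X)) ^ s \<le> (real p ^ X) ^ s"
        using tle tpos by (intro power_mono) simp_all
    qed
    moreover have "(real p ^ X) ^ s = real p ^ X * real p ^ ((s - 1) * X)"
    proof -
      obtain s' where s': "s = Suc s'" using s by (cases s) auto
      show ?thesis unfolding s' by (simp add: power_mult[symmetric] mult.commute)
    qed
    ultimately have "1 / real p ^ ((s - 1) * X) \<le> f X" unfolding f_def using p0 by simp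
    then show "chi k s a p \<ge> 1 / real p ^ ((s - 1) * xi k p)" using chi unfolding X_def by simp
  next
    define I where "I = {1..s}"
    define v where "v = multiplicity p k"
    have Xv: "X \<ge> v + 1" unfolding X_def xi_def nu_def v_def by simp
    have X1: "X \<ge> 1" using Xv by simp
    have finI: "finite I" unfolding I_def by simp
    obtain j0 where j0: "j0 \<in> I" "\<not> int p dvd a j0" using g by (auto simp: dvd_Gcd_iff I_def)
    have "{x \<in> PiE {1..s} (\<lambda>_. {y\<in>{0..<p ^ X}. coprime y (p ^ X)}).
            int (p ^ X) dvd (\<Sum>j\<in>{1..s}. a j * int (x j) ^ k)} \<noteq> {}"
      using Mpos unfolding M_def X_def by (metis card.empty less_irrefl)
    then obtain x0 where x0: "x0 \<in> PiE I (\<lambda>_. {y\<in>{0..<p ^ X}. coprime y (p ^ X)})"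
      "int (p ^ X) dvd (\<Sum>j\<in>I. a j * int (x0 j) ^ k)" unfolding I_def by blast
    define y0 where "y0 = (\<lambda>j. int (x0 j))"
    define P where "P = (\<lambda>N (y::nat\<Rightarrow>int) (y'::nat\<Rightarrow>int).
        (\<forall>j\<in>I. [y' j = y j] (mod int p ^ (N - v))) \<and>
        (\<forall>j\<in>I. coprime (y' j) (int p)) \<and>
        int p ^ (N + 1) dvd (\<Sum>j\<in>I. a j * y' j ^ k))"
    define Y where "Y = rec_nat y0 (\<lambda>n y. SOME y'. P (X + n) y y')"
    have Y0: "Y 0 = y0" unfolding Y_def by simp
    have YS: "Y (Suc n) = (SOME y'. P (X + n) (Y n) y')" for n unfolding Y_def by simp
    have c0: "\<forall>j\<in>I. coprime (y0 j) (int p)"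
    proof
      fix j assume "j \<in> I"
      then have "coprime (x0 j) (p ^ X)" using x0(1) by (auto simp: PiE_iff)
      then have "\<not> p dvd x0 j" using coprime_pp_iff[OF p X1] by simp
      then have "\<not> int p dvd y0 j" unfolding y0_def by simp
      then show "coprime (y0 j) (int p)" using coprime_int_prime_iff[OF p] by blast
    qed
    have ex: "\<exists>y'. P N y y'" if "N \<ge> X" "\<forall>j\<in>I. coprime (y j) (int p)"
      "int p ^ N dvd (\<Sum>j\<in>I. a j * y j ^ k)" for N y
      unfolding P_def v_def using hensel_step[OF p k finI j0 _ that(2,3)] that(1) unfolding X_def by blast
    have inv: "(\<forall>j\<in>I. coprime (Y n j) (int p)) \<and> int p ^ (X + n) dvd (\<Sum>j\<in>I. a j * Y n j ^ k)" for n
    proof (induction n)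
      case 0 then show ?case using c0 x0(2) Y0 unfolding y0_def by simp
    next
      case (Suc n)
      have "\<exists>y'. P (X + n) (Y n) y'" by (rule ex) (use Suc in auto)
      from someI_ex[OF this] have "P (X + n) (Y n) (Y (Suc n))" unfolding YS .
      then show ?case unfolding P_def by simp
    qed
    have stp: "P (X + n) (Y n) (Y (Suc n))" for n
    proof -
      have "\<exists>y'. P (X + n) (Y n) y'" by (rule ex) (use inv[of n] in auto)
      from someI_ex[OF this] show ?thesis unfolding YS .
    qed
    show "padic_unit_solution k s a p"
      unfolding padic_unit_solution_def
    proof (intro exI[of _ "\<lambda>j n. Y n j"] conjI ballI allI)
      fix j n assume j: "j \<in> {1..s}"
      have "[Y (Suc n) j = Y n j] (mod int p ^ (X + n - v))" using stp[of n] j unfolding P_def I_def by blast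
      moreover have "int p ^ n dvd int p ^ (X + n - v)" using Xv by (intro le_imp_power_dvd) simp
      ultimately show "[Y (Suc n) j = Y n j] (mod int p ^ n)" by (rule cong_dvd_modulus)
    next
      fix j n assume j: "j \<in> {1..s}"
      show "coprime (Y n j) (int p)" using inv[of n] j unfolding I_def by blast
    next
      fix n
      have "int p ^ n dvd int p ^ (X + n)" by (intro le_imp_power_dvd) simp
      then have "int p ^ n dvd (\<Sum>j\<in>I. a j * Y n j ^ k)" using inv[of n] dvd_trans by blast
      then show "[(\<Sum>j\<in>{1..s}. a j * Y n j ^ k) = 0] (mod int p ^ n)" unfolding I_def by (simp add: cong_0_iff)
    qed
  qed
  show ?thesis using part1 part2 part3 by blast
qed

end
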